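(* If $M_G$ is a connected mixed graph whose matrix $N(M_G)$ has rank $2$, then its underlying graph $G$ is a complete bipartite graph.
   Context: A mixed graph $M_G$ is obtained from a finite simple graph $G$ (its underlying graph) by orienting the edges of some subset of $E(G)$; it is connected if $G$ is. With $\omega=\frac{1+\mathbf{i}\sqrt3}{2}$, $N(M_G)$ has $(u,v)$-entry $\omega$ if $\overrightarrow{uv}$ is an arc, $\bar\omega$ if $\overrightarrow{vu}$ is an arc, $1$ for an undirected edge $\{u,v\}$, $0$ otherwise. *)

theory Defs
  imports "HOL-Analysis.Analysis"
begin

text \<open>A mixed graph on the finite vertex type 'n is given by the adjacency
relation adj of its underlying simple graph and an arcs relation arcs:
arcs u v means the edge {u,v} is oriented from u to v.  Edges of the
underlying graph that are not oriented in either direction are undirected.\<close>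

definition simple_graph :: "('n \<Rightarrow> 'n \<Rightarrow> bool) \<Rightarrow> bool" where
  "simple_graph adj \<longleftrightarrow> (\<forall>u v. adj u v \<longrightarrow> adj v u) \<and> (\<forall>u. \<not> adj u u)"

definition mixed_graph :: "('n \<Rightarrow> 'n \<Rightarrow> bool) \<Rightarrow> ('n \<Rightarrow> 'n \<Rightarrow> bool) \<Rightarrow> bool" where
  "mixed_graph adj arcs \<longleftrightarrow> simple_graph adj \<and>
     (\<forall>u v. arcs u v \<longrightarrow> adj u v) \<and> (\<forall>u v. arcs u v \<longrightarrow> \<not> arcs v u)"

definition connected_graph :: "('n \<Rightarrow> 'n \<Rightarrow> bool) \<Rightarrow> bool" where
  "connected_graph adj \<longleftrightarrow> (\<forall>u v. adj\<^sup>*\<^sup>* u v)"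

definition omega :: complex where
  "omega = (1 + \<i> * complex_of_real (sqrt 3)) / 2"

definition N_matrix :: "('n \<Rightarrow> 'n \<Rightarrow> bool) \<Rightarrow> ('n \<Rightarrow> 'n \<Rightarrow> bool) \<Rightarrow> complex ^ 'n ^ 'n" where
  "N_matrix adj arcs = (\<chi> u v.
     if arcs u v then omega
     else if arcs v u then cnj omega
     else if adj u v then 1 else 0)"

definition complete_bipartite :: "('n \<Rightarrow> 'n \<Rightarrow> bool) \<Rightarrow> bool" where
  "complete_bipartite adj \<longleftrightarrow> (\<exists>X Y. X \<noteq> {} \<and> Y \<noteq> {} \<and> X \<inter> Y = {} \<and> X \<union> Y = UNIV \<and>
     (\<forall>u v. adj u v \<longleftrightarrow> (u \<in> X \<and> v \<in> Y) \<or> (u \<in> Y \<and> v \<in> X)))"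

end

theory Submission
  imports Defs
begin
lemma rank_ge_card:
  fixes A :: "'a::field^'n^'m" and S :: "'m set"
  assumes indep: "\<And>d. (\<Sum>i\<in>S. d i *s row i A) = 0 \<Longrightarrow> \<forall>i\<in>S. d i = 0"
  shows "card S \<le> rank A"
proof -
  have fin: "finite S" by simp
  have inj: "inj_on (\<lambda>i. row i A) S"
  proof (rule inj_onI, rule ccontr)
    fix i j assume ij: "i \<in> S" "j \<in> S" "row i A = row j A" "i \<noteq> j"
    define d where "d = (\<lambda>k. if k = i then (1::'a) else if k = j then -1 else 0)"
    have "(\<Sum>k\<in>S. d k *s row k A) = (\<Sum>k\<in>{i,j}. d k *s row k A)"
      by (rule sum.mono_neutral_right) (use ij in \<open>auto simp: d_def\<close>)
    also have "\<dots> = 0" using ij by (simp add: d_def)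
    finally have "\<forall>k\<in>S. d k = 0" by (rule indep)
    then have "d i = 0" using ij by blast
    then show False by (simp add: d_def)
  qed
  let ?B = "(\<lambda>i. row i A) ` S"
  have "vec.independent ?B"
    unfolding vec.independent_explicit
  proof (intro conjI allI impI ballI)
    show "finite ?B" by simp
    fix c v assume c: "(\<Sum>v\<in>?B. c v *s v) = 0" and v: "v \<in> ?B"
    have "(\<Sum>i\<in>S. c (row i A) *s row i A) = 0"
      using c by (simp add: sum.reindex[OF inj])
    then have "\<forall>i\<in>S. c (row i A) = 0" by (rule indep)
    with v show "c v = 0" by auto
  qed
  moreover have "?B \<subseteq> rows A" by (auto simp: rows_def)
  ultimately have "card ?B \<le> rank A"
    unfolding row_rank_def_gen by (intro vec.independent_card_le_dim)
  then show ?thesis using card_image[OF inj] by simp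
qed



lemma omega_unit: "omega * cnj omega = 1"
  by (simp add: omega_def complex_eq_iff power2_eq_square algebra_simps)

lemma omega_key:
  assumes "p \<in> {1, omega, cnj omega}" "q \<in> {1, omega, cnj omega}" "r \<in> {1, omega, cnj omega}"
  shows "p * q * cnj r + cnj (p * q * cnj r) \<noteq> 0"
proof -
  have s: "sqrt 3 * sqrt 3 = (3::real)" by simp
  have R: "Re omega = 1/2" "Im omega = sqrt 3 / 2" by (simp_all add: omega_def)
  have e: "Re (p * q * cnj r) = Re p * Re q * Re r - Im p * Im q * Re r + Re p * Im q * Im r + Im p * Re q * Im r"
    by (simp add: algebra_simps)
  have "Re (p * q * cnj r) \<noteq> 0"
    unfolding e using assms
    by (elim insertE emptyE; simp add: R s)
  moreover have gen: "\<And>x::complex. Re x \<noteq> 0 \<Longrightarrow> x + cnj x \<noteq> 0" by (simp add: complex_eq_iff)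
  ultimately show ?thesis by blast
qed


lemma N_nth: "N_matrix adj arcs $ u $ v = (if arcs u v then omega
     else if arcs v u then cnj omega else if adj u v then 1 else 0)"
  by (simp add: N_matrix_def)

context
  fixes adj arcs :: "'n::finite \<Rightarrow> 'n \<Rightarrow> bool"
  assumes mg: "mixed_graph adj arcs"
begin

lemma N_herm: "N_matrix adj arcs $ v $ u = cnj (N_matrix adj arcs $ u $ v)"
  using mg by (auto simp: N_nth mixed_graph_def simple_graph_def)

lemma N_nonadj: "\<not> adj u v \<Longrightarrow> N_matrix adj arcs $ u $ v = 0"
  using mg by (auto simp: N_nth mixed_graph_def simple_graph_def)

lemma N_adj: "adj u v \<Longrightarrow> N_matrix adj arcs $ u $ v \<in> {1, omega, cnj omega}"
  using mg by (auto simp: N_nth mixed_graph_def simple_graph_def)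

lemma N_unit: "adj u v \<Longrightarrow> N_matrix adj arcs $ u $ v * cnj (N_matrix adj arcs $ u $ v) = 1"
  using N_adj[of u v] omega_unit by (auto simp: mult.commute)

lemma N_nz: "adj u v \<Longrightarrow> N_matrix adj arcs $ u $ v \<noteq> 0"
  using N_unit by force

lemma adj_sym: "adj u v \<Longrightarrow> adj v u"
  using mg by (auto simp: mixed_graph_def simple_graph_def)

lemma adj_irrefl: "\<not> adj u u"
  using mg by (auto simp: mixed_graph_def simple_graph_def)

lemma triangle_rank:
  assumes "adj x y" "adj x z" "adj y z"
  shows "3 \<le> rank (N_matrix adj arcs)"
proof -
  let ?N = "N_matrix adj arcs"
  have d: "x \<noteq> y" "x \<noteq> z" "y \<noteq> z" using assms adj_irrefl by auto
  have "card {x,y,z} \<le> rank ?N"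
  proof (rule rank_ge_card)
    fix d :: "'n \<Rightarrow> complex"
    assume h: "(\<Sum>i\<in>{x,y,z}. d i *s row i ?N) = 0"
    define a where "a = ?N $ x $ y"
    define b where "b = ?N $ x $ z"
    define c where "c = ?N $ y $ z"
    have Ex: "d y * cnj a + d z * cnj b = 0"
      using arg_cong[OF h, of "\<lambda>v. v $ x"] d
      by (simp add: row_def a_def b_def N_herm[of x y] N_herm[of x z] N_nonadj adj_irrefl)
    have Ey: "d x * a + d z * cnj c = 0"
      using arg_cong[OF h, of "\<lambda>v. v $ y"] d
      by (simp add: row_def a_def c_def N_herm[of y z] N_nonadj adj_irrefl)
    have Ez: "d x * b + d y * c = 0"
      using arg_cong[OF h, of "\<lambda>v. v $ z"] d
      by (simp add: row_def b_def c_def N_nonadj adj_irrefl)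
    have ua: "a * cnj a = 1" "b * cnj b = 1" "c * cnj c = 1"
      using N_unit assms by (auto simp: a_def b_def c_def)
    have "d x * (a * c * cnj b + cnj (a * c * cnj b)) = 0"
      using Ex Ey Ez ua by simp algebra
    moreover have "a * c * cnj b + cnj (a * c * cnj b) \<noteq> 0"
      using omega_key N_adj assms by (simp add: a_def b_def c_def)
    ultimately have dx: "d x = 0" by simp
    have cnz: "c \<noteq> 0" "cnj c \<noteq> 0" using ua by auto
    have dy: "d y = 0" using Ez dx cnz by simp
    have dz: "d z = 0" using Ey dx cnz by simp
    show "\<forall>i\<in>{x,y,z}. d i = 0" using dx dy dz by simp
  qed
  then show ?thesis using d by simp
qed

lemma p4_rank:
  assumes "adj x y" "adj y z" "adj z w" "\<not> adj x z" "\<not> adj x w" "\<not> adj y w"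
    and "x \<noteq> z" "x \<noteq> w" "y \<noteq> w"
  shows "4 \<le> rank (N_matrix adj arcs)"
proof -
  let ?N = "N_matrix adj arcs"
  have d: "x \<noteq> y" "y \<noteq> z" "z \<noteq> w" using assms adj_irrefl by auto
  have nz: "\<not> adj z x" "\<not> adj w x" "\<not> adj w y" using assms adj_sym by blast+
  have "card {x,y,z,w} \<le> rank ?N"
  proof (rule rank_ge_card)
    fix d :: "'n \<Rightarrow> complex"
    assume h: "(\<Sum>i\<in>{x,y,z,w}. d i *s row i ?N) = 0"
    have nzs: "?N $ x $ y \<noteq> 0" "?N $ y $ z \<noteq> 0" "?N $ z $ w \<noteq> 0"
      "?N $ y $ x \<noteq> 0" "?N $ z $ y \<noteq> 0" "?N $ w $ z \<noteq> 0"
      using N_nz assms adj_sym by blast+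
    have Ex: "d y * ?N $ y $ x = 0"
      using arg_cong[OF h, of "\<lambda>v. v $ x"] d assms nz
      by (simp add: row_def N_nonadj adj_irrefl)
    have Ew: "d z * ?N $ z $ w = 0"
      using arg_cong[OF h, of "\<lambda>v. v $ w"] d assms nz
      by (simp add: row_def N_nonadj adj_irrefl)
    have Ey: "d x * ?N $ x $ y + d z * ?N $ z $ y = 0"
      using arg_cong[OF h, of "\<lambda>v. v $ y"] d assms nz
      by (simp add: row_def N_nonadj adj_irrefl)
    have Ez: "d y * ?N $ y $ z + d w * ?N $ w $ z = 0"
      using arg_cong[OF h, of "\<lambda>v. v $ z"] d assms nz
      by (simp add: row_def N_nonadj adj_irrefl)
    have dy: "d y = 0" using Ex nzs by simp
    have dz: "d z = 0" using Ew nzs by simp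
    have dx: "d x = 0" using Ey dz nzs by simp
    have dw: "d w = 0" using Ez dy nzs by simp
    show "\<forall>i\<in>{x,y,z,w}. d i = 0" using dx dy dz dw by simp
  qed
  then show ?thesis using d assms by simp
qed

end

theorem theorem5p7:
  fixes adj arcs :: "'n::finite \<Rightarrow> 'n \<Rightarrow> bool"
  assumes "mixed_graph adj arcs"
    and "connected_graph adj"
    and "rank (N_matrix adj arcs) = 2"
  shows "complete_bipartite adj"
proof -
  note mg = assms(1)
  have sym: "\<And>u v. adj u v \<Longrightarrow> adj v u" using adj_sym[OF mg] by blast
  have irr: "\<And>u. \<not> adj u u" using adj_irrefl[OF mg] by blast
  have notri: "\<And>a b c. adj a b \<Longrightarrow> adj a c \<Longrightarrow> adj b c \<Longrightarrow> False"
  proof -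
    fix a b c assume h: "adj a b" "adj a c" "adj b c"
    have "3 \<le> rank (N_matrix adj arcs)" by (rule triangle_rank[OF mg h])
    with assms(3) show False by simp
  qed
  have nop4: "\<And>a b c e. adj a b \<Longrightarrow> adj b c \<Longrightarrow> adj c e \<Longrightarrow> \<not> adj a c \<Longrightarrow> \<not> adj a e
     \<Longrightarrow> \<not> adj b e \<Longrightarrow> a \<noteq> c \<Longrightarrow> a \<noteq> e \<Longrightarrow> b \<noteq> e \<Longrightarrow> False"
  proof -
    fix a b c e assume h: "adj a b" "adj b c" "adj c e" "\<not> adj a c" "\<not> adj a e"
     "\<not> adj b e" "a \<noteq> c" "a \<noteq> e" "b \<noteq> e"
    have "4 \<le> rank (N_matrix adj arcs)" by (rule p4_rank[OF mg h])
    with assms(3) show False by simp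
  qed
  obtain x :: 'n where True by simp
  have reach: "v = x \<or> adj x v \<or> (\<exists>y. adj x y \<and> adj y v)" for v
  proof -
    have "adj\<^sup>*\<^sup>* x v" using assms(2) by (simp add: connected_graph_def)
    then show ?thesis
    proof (induction rule: rtranclp_induct)
      case base
      then show ?case by simp
    next
      case (step v w)
      show ?case
      proof (cases "w = x \<or> adj x w")
        case True
        then show ?thesis by blast
      next
        case False
        then have wx: "w \<noteq> x" "\<not> adj x w" by auto
        from step.IH show ?thesis
        proof (elim disjE exE conjE)
          assume "v = x" then show ?thesis using step.hyps(2) wx by simp
        next
          assume "adj x v" then show ?thesis using step.hyps(2) by blast
        next
          fix y assume xy: "adj x y" and yv: "adj y v"
          show ?thesis
          proof (cases "adj y w")
            case True then show ?thesis using xy by blast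
          next
            case False
            show ?thesis
            proof (cases "adj x v")
              case True then show ?thesis using step.hyps(2) by blast
            next
              case nxv: False
              have xv: "x \<noteq> v" using step.hyps(2) wx by blast
              have yw: "y \<noteq> w" using xy wx by blast
              have False
                by (rule nop4[OF xy yv step.hyps(2) nxv wx(2) False xv wx(1)[symmetric] yw])
              then show ?thesis ..
            qed
          qed
        qed
      qed
    qed
  qed
  define Y where "Y = {v. adj x v}"
  define X where "X = - Y"
  have Yne: "Y \<noteq> {}"
  proof
    assume "Y = {}"
    then have allx: "\<And>v. v = x" using reach by (auto simp: Y_def)
    have z: "N_matrix adj arcs $ i $ j = 0" for i j
      using N_nonadj[OF mg, of i j] allx[of i] allx[of j] irr by metis
    have "rows (N_matrix adj arcs) \<subseteq> {0}"
      by (auto simp: rows_def row_def vec_eq_iff z)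
    then have "rank (N_matrix adj arcs) = 0" unfolding row_rank_def_gen by simp
    with assms(3) show False by simp
  qed
  have Xne: "X \<noteq> {}" using irr by (auto simp: X_def Y_def)
  have char: "adj u v \<longleftrightarrow> (u \<in> X \<and> v \<in> Y) \<or> (u \<in> Y \<and> v \<in> X)" for u v
  proof
    assume uv: "adj u v"
    show "(u \<in> X \<and> v \<in> Y) \<or> (u \<in> Y \<and> v \<in> X)"
    proof (rule ccontr)
      assume c: "\<not> ?thesis"
      then consider "adj x u" "adj x v" | "\<not> adj x u" "\<not> adj x v" by (auto simp: X_def Y_def)
      then show False
      proof cases
        case 1 show False by (rule notri[OF 1 uv])
      next
        case 2
        have ux: "u \<noteq> x" using 2 uv by blast
        have vx: "v \<noteq> x" using 2 uv sym by blast
        obtain y where xy: "adj x y" and yu: "adj y u" using reach[of u] ux 2 by blast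
        show False
        proof (cases "adj y v")
          case True show False by (rule notri[OF yu True uv])
        next
          case False
          have "y \<noteq> v" using xy 2 by blast
          then show False using nop4[OF xy yu uv 2 False ux[symmetric] vx[symmetric]] by blast
        qed
      qed
    qed
  next
    have one: "adj u v" if u: "u \<in> X" and v: "v \<in> Y" for u v
    proof (rule ccontr)
      assume nuv: "\<not> adj u v"
      have xv: "adj x v" using v by (simp add: Y_def)
      have xu: "\<not> adj x u" using u by (simp add: X_def Y_def)
      have ux: "u \<noteq> x" using xv nuv by blast
      obtain y where xy: "adj x y" and yu: "adj y u" using reach[of u] ux xu by blast
      have yv: "y \<noteq> v" using yu nuv sym by blast
      have nvy: "\<not> adj v y" using notri[OF xv xy] by blast
      have vu: "v \<noteq> u" using xv xu by blast
      have nvu: "\<not> adj v u" using nuv sym by blast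
      show False using nop4[OF sym[OF xv] xy yu nvy nvu xu yv[symmetric] \<open>v \<noteq> u\<close> ux[symmetric]] .
    qed
    assume "(u \<in> X \<and> v \<in> Y) \<or> (u \<in> Y \<and> v \<in> X)"
    then show "adj u v" using one sym by blast
  qed
  show ?thesis unfolding complete_bipartite_def
    by (rule exI[of _ X], rule exI[of _ Y]) (use Xne Yne char in \<open>auto simp: X_def\<close>)
qed

end
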